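(* Let $N, n, p, \ell, K \in \mathbb{N}$ with $n \le N$. For $i = 1, \dots, \ell$ let $\boldsymbol A_i \in \mathbb{R}^{N \times N_i}$ with $N_i = \binom{N+i-1}{i}$, and let $\boldsymbol B \in \mathbb{R}^{N \times p}$. Consider the discrete-time system $$\boldsymbol f(\boldsymbol x, \boldsymbol u) = \sum_{i=1}^{\ell} \boldsymbol A_i \boldsymbol x^i + \boldsymbol B \boldsymbol u, \qquad \boldsymbol x \in \mathbb{R}^N,\ \boldsymbol u \in \mathbb{R}^p.$$ Let $\boldsymbol V_n \in \mathbb{R}^{N \times n}$ have orthonormal columns spanning $\mathcal{V}_n \subset \mathbb{R}^N$. Let $n_i = \binom{n+i-1}{i}$ and define the intrusive reduced operators $\tilde{\boldsymbol B} = \boldsymbol V_n^T \boldsymbol B$ and $\tilde{\boldsymbol A}_i \in \mathbb{R}^{n \times n_i}$ as the unique matrix with $\tilde{\boldsymbol A}_i \boldsymbol y^i = \boldsymbol V_n^T \boldsymbol A_i (\boldsymbol V_n \boldsymbol y)^i$ for all $\boldsymbol y \in \mathbb{R}^n$, $i = 1, \dots, \ell$. Let $\boldsymbol x_0 \in \mathcal{V}_n$ and $\boldsymbol u_0, \dots, \boldsymbol u_{K-1} \in \mathbb{R}^p$, and generate re-projected states $\bar{\boldsymbol x}_0 = \boldsymbol V_n^T \boldsymbol x_0$, $\bar{\boldsymbol x}_{k+1} = \boldsymbol V_n^T \boldsymbol f(\boldsymbol V_n \bar{\boldsymbol x}_k, \boldsymbol u_k)$ for $k = 0, \dots, K-1$.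 Set $\bar{\boldsymbol X} = [\bar{\boldsymbol x}_0, \dots, \bar{\boldsymbol x}_{K-1}]$, $\bar{\boldsymbol Y} = [\bar{\boldsymbol x}_1, \dots, \bar{\boldsymbol x}_K]$, $\bar{\boldsymbol X}^i = [\bar{\boldsymbol x}_0^i, \dots, \bar{\boldsymbol x}_{K-1}^i] \in \mathbb{R}^{n_i \times K}$, and $\boldsymbol U = [\boldsymbol u_0, \dots, \boldsymbol u_{K-1}] \in \mathbb{R}^{p \times K}$. Suppose $$K \ge p + \sum_{i=1}^{\ell} n_i,$$ and consider the data matrix $$\bar{\boldsymbol D} = \begin{bmatrix} \bar{\boldsymbol X} \\ \bar{\boldsymbol X}^2 \\ \vdots \\ \bar{\boldsymbol X}^{\ell} \\ \boldsymbol U \end{bmatrix} \in \mathbb{R}^{(\sum_{i=1}^{\ell} n_i + p) \times K}.$$ If $\bar{\boldsymbol D}$ has full rank, then the least-squares problem $$\min_{\hat{\boldsymbol O} \in \mathbb{R}^{n \times (\sum_{i=1}^{\ell} n_i + p)}} \|\bar{\boldsymbol D}^T \hat{\boldsymbol O}^T - \bar{\boldsymbol Y}^T\|_F^2$$ has a unique solution $\hat{\boldsymbol O}^*$, it attains objective value $0$, and $\hat{\boldsymbol O}^* = [\tilde{\boldsymbol A}_1, \tilde{\boldsymbol A}_2, \dots, \tilde{\boldsymbol A}_{\ell}, \tilde{\boldsymbol B}]$.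
   Context: For a vector $\boldsymbol z \in \mathbb{R}^d$ and $i \in \mathbb{N}$, the $i$-th power $\boldsymbol z^i \in \mathbb{R}^{\binom{d+i-1}{i}}$ is the vector obtained from the $i$-fold Kronecker product $\boldsymbol z \otimes \cdots \otimes \boldsymbol z$ by removing duplicate entries arising from commutativity of multiplication, i.e., it lists each degree-$i$ monomial in the entries of $\boldsymbol z$ exactly once (in a fixed ordering); $\boldsymbol z^1 = \boldsymbol z$. Since these monomials are linearly independent functions, each $\tilde{\boldsymbol A}_i$ is well defined and unique. *)

theory Defs
  imports "Jordan_Normal_Form.DL_Rank"
begin

text \<open>Degree-i monomials in d variables, each listed once as a nondecreasing
  list of variable indices (indices are 0-based), in a fixed ordering.\<close>
fun mons :: "nat \<Rightarrow> nat \<Rightarrow> nat list list" where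
  "mons d 0 = [[]]"
| "mons d (Suc i) =
     concat (map (\<lambda>j. map (\<lambda>m. j # m) (filter (\<lambda>m. \<forall>k\<in>set m. j \<le> k) (mons d i))) [0..<d])"

definition vpow :: "real vec \<Rightarrow> nat \<Rightarrow> real vec" where
  "vpow z i = vec (length (mons (dim_vec z) i))
      (\<lambda>r. prod_list (map (\<lambda>j. z $ j) (mons (dim_vec z) i ! r)))"

definition sysf :: "(nat \<Rightarrow> real mat) \<Rightarrow> real mat \<Rightarrow> nat \<Rightarrow> real vec \<Rightarrow> real vec \<Rightarrow> real vec" where
  "sysf A B l x u = foldr (\<lambda>i acc. A i *\<^sub>v vpow x i + acc) [1..<l+1] (B *\<^sub>v u)"

definition datacol :: "nat \<Rightarrow> real vec \<Rightarrow> real vec \<Rightarrow> real vec" where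
  "datacol l x u = foldr (\<lambda>i acc. vpow x i @\<^sub>v acc) [1..<l+1] u"

definition hcat :: "(nat \<Rightarrow> real mat) \<Rightarrow> nat \<Rightarrow> real mat \<Rightarrow> real mat" where
  "hcat M l C = transpose_mat (foldr (\<lambda>i acc. transpose_mat (M i) @\<^sub>r acc) [1..<l+1] (transpose_mat C))"

definition frob_sq :: "real mat \<Rightarrow> real" where
  "frob_sq M = (\<Sum>i<dim_row M. \<Sum>j<dim_col M. (M $$ (i, j))\<^sup>2)"

definition full_rank :: "real mat \<Rightarrow> bool" where
  "full_rank M \<longleftrightarrow> vec_space.rank (dim_row M) M = min (dim_row M) (dim_col M)"

end

theory Submission
  imports Defs
begin


lemma rank_orth:
  fixes D :: "real mat" and r :: "real vec"
  assumes D: "D \<in> carrier_mat M K" and rk: "vec_space.rank M D = M"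
    and r: "r \<in> carrier_vec M" and orth: "\<And>k. k < K \<Longrightarrow> r \<bullet> col D k = 0"
  shows "r = 0\<^sub>v M"
proof -
  interpret vec_space "TYPE(real)" M .
  obtain S where S: "maximal S (\<lambda>T. T \<subseteq> set (cols D) \<and> lin_indpt T)"
    using maximal_exists[of "(\<lambda>T. T \<subseteq> set (cols D) \<and> lin_indpt T)" "card (set (cols D))" "{}"]
    by (meson List.finite_set card_mono empty_iff empty_subsetI finite_lin_indpt2 rev_finite_subset)
  have cS: "card S = M" using rank_card_indpt[OF D S] rk by simp
  have Ssub: "S \<subseteq> set (cols D)" and li: "lin_indpt S" using S unfolding maximal_def by auto
  have Scar: "S \<subseteq> carrier_vec M" using Ssub D cols_dim by blast
  have fS: "finite S" using Ssub finite_subset by blast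
  have "basis S" using dim_li_is_basis[OF fin_dim fS _ li] Scar cS dim_is_n by simp
  then have spanS: "span S = carrier_vec M" unfolding basis_def by simp
  have "r \<in> orthogonal_complement S"
    unfolding orthogonal_complement_def using r Ssub orth D
    by (auto simp: cols_def in_set_conv_nth)
  then have "r \<in> orthogonal_complement (span S)" using Scar by simp
  then have rr: "r \<bullet> r = 0" using r spanS unfolding orthogonal_complement_def by auto
  have "\<forall>i\<in>{0..<M}. r $ i * r $ i = 0"
    using rr r unfolding scalar_prod_def
    by (subst sum_nonneg_eq_0_iff[symmetric]) auto
  then show ?thesis using r by (intro eq_vecI) auto
qed



lemma choose_sum_aux:
  "t \<le> d \<Longrightarrow> (\<Sum>j'\<in>{d-t..<d}. (d - j' + i - 1 choose i)) = (t + i choose Suc i)"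
proof (induction t)
  case 0 then show ?case by simp
next
  case (Suc t)
  have "{d - Suc t..<d} = insert (d - Suc t) {d - t..<d}" using Suc.prems by auto
  then have "(\<Sum>j'\<in>{d-Suc t..<d}. (d - j' + i - 1 choose i)) =
     (d - (d - Suc t) + i - 1 choose i) + (\<Sum>j'\<in>{d-t..<d}. (d - j' + i - 1 choose i))"
    using Suc.prems by simp
  also have "\<dots> = (t + i choose i) + (t + i choose Suc i)" using Suc by simp
  also have "\<dots> = (Suc t + i choose Suc i)" by simp
  finally show ?case .
qed

lemma mons_filter_len:
  "j \<le> d \<Longrightarrow> length (filter (\<lambda>m. \<forall>k\<in>set m. j \<le> k) (mons d i)) = (d - j + i - 1 choose i)"
proof (induction i arbitrary: j)
  case 0 then show ?case by simp
next
  case (Suc i)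
  let ?L = "\<lambda>j. length (filter (\<lambda>m. \<forall>k\<in>set m. j \<le> k) (mons d i))"
  have step: "length (filter (\<lambda>m. \<forall>k\<in>set m. j \<le> k)
      (map (\<lambda>m. j' # m) (filter (\<lambda>m. \<forall>k\<in>set m. j' \<le> k) (mons d i)))) = (if j \<le> j' then ?L j' else 0)"
    for j'
  proof (cases "j \<le> j'")
    case True
    have "filter (\<lambda>m. \<forall>k\<in>set m. j \<le> k) (map (\<lambda>m. j' # m) (filter (\<lambda>m. \<forall>k\<in>set m. j' \<le> k) (mons d i)))
       = map (\<lambda>m. j' # m) (filter (\<lambda>m. \<forall>k\<in>set m. j' \<le> k) (mons d i))"
      using True by (force intro!: filter_True)
    then show ?thesis using True by simp
  next
    case False
    have "filter (\<lambda>m. \<forall>k\<in>set m. j \<le> k) (map (\<lambda>m. j' # m) (filter (\<lambda>m. \<forall>k\<in>set m. j' \<le> k) (mons d i))) = []"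
      using False by (auto simp: filter_empty_conv)
    then show ?thesis using False by simp
  qed
  have "length (filter (\<lambda>m. \<forall>k\<in>set m. j \<le> k) (mons d (Suc i)))
     = (\<Sum>j'\<leftarrow>[0..<d]. length (filter (\<lambda>m. \<forall>k\<in>set m. j \<le> k)
      (map (\<lambda>m. j' # m) (filter (\<lambda>m. \<forall>k\<in>set m. j' \<le> k) (mons d i)))))"
    by (simp only: mons.simps filter_concat length_concat map_map comp_def)
  also have "\<dots> = (\<Sum>j'\<leftarrow>[0..<d]. if j \<le> j' then ?L j' else 0)"
    by (simp only: step)
  also have "\<dots> = (\<Sum>j'\<in>{0..<d}. if j \<le> j' then ?L j' else 0)"
    by (simp add: sum.set_conv_list[symmetric] distinct_sum_list_conv_Sum sum_list_distinct_conv_sum_set)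
  also have "\<dots> = (\<Sum>j'\<in>{j..<d}. ?L j')"
    by (rule sum.mono_neutral_cong_right) auto
  also have "\<dots> = (\<Sum>j'\<in>{j..<d}. (d - j' + i - 1 choose i))"
    using Suc.IH by (intro sum.cong) auto
  also have "\<dots> = (\<Sum>j'\<in>{d - (d - j)..<d}. (d - j' + i - 1 choose i))" using Suc.prems by simp
  also have "\<dots> = (d - j + i choose Suc i)" by (rule choose_sum_aux) simp
  finally show ?case by simp
qed

lemma length_mons: "length (mons d i) = (d + i - 1 choose i)"
  using mons_filter_len[of 0 d i] by simp

lemma dim_vpow[simp]: "dim_vec (vpow z i) = (dim_vec z + i - 1 choose i)"
  by (simp add: vpow_def length_mons)



lemma transpose_append_rows_mult:
  fixes P Q :: "real mat"
  assumes P: "P \<in> carrier_mat a m" and Q: "Q \<in> carrier_mat b m"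
    and v: "v \<in> carrier_vec a" and w: "w \<in> carrier_vec b"
  shows "transpose_mat (P @\<^sub>r Q) *\<^sub>v (v @\<^sub>v w) = transpose_mat P *\<^sub>v v + transpose_mat Q *\<^sub>v w"
proof -
  have PQ: "P @\<^sub>r Q \<in> carrier_mat (a+b) m" using P Q by (rule carrier_append_rows)
  show ?thesis
  proof (rule eq_vecI)
    fix j assume "j < dim_vec (transpose_mat P *\<^sub>v v + transpose_mat Q *\<^sub>v w)"
    then have j: "j < m" using P Q by simp
    have cj: "col (P @\<^sub>r Q) j = col P j @\<^sub>v col Q j"
    proof (rule eq_vecI)
      fix i assume "i < dim_vec (col P j @\<^sub>v col Q j)"
      then have i: "i < a + b" using P Q by simp
      show "col (P @\<^sub>r Q) j $ i = (col P j @\<^sub>v col Q j) $ i"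
        using P Q j i unfolding append_rows_def by auto
    qed (use P Q in \<open>simp add: append_rows_def\<close>)
    have "(transpose_mat (P @\<^sub>r Q) *\<^sub>v (v @\<^sub>v w)) $ j = col (P @\<^sub>r Q) j \<bullet> (v @\<^sub>v w)"
      using PQ j by simp
    also have "\<dots> = col P j \<bullet> v + col Q j \<bullet> w"
      unfolding cj using P Q v w by (intro scalar_prod_append) auto
    also have "\<dots> = (transpose_mat P *\<^sub>v v + transpose_mat Q *\<^sub>v w) $ j"
      using P Q j by simp
    finally show "(transpose_mat (P @\<^sub>r Q) *\<^sub>v (v @\<^sub>v w)) $ j = (transpose_mat P *\<^sub>v v + transpose_mat Q *\<^sub>v w) $ j" .
  qed (insert carrier_matD[OF PQ] P Q, simp)
qed



lemma datacol_dim: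
  "dim_vec (foldr (\<lambda>i acc. vpow x i @\<^sub>v acc) xs u) = sum_list (map (\<lambda>i. (dim_vec x + i - 1 choose i)) xs) + dim_vec u"
  by (induction xs) auto

lemma hcat_aux:
  fixes At :: "nat \<Rightarrow> real mat"
  assumes At: "\<And>i. i \<in> set xs \<Longrightarrow> At i \<in> carrier_mat n ((n + i - 1) choose i)"
    and C: "C \<in> carrier_mat n p" and x: "x \<in> carrier_vec n" and u: "u \<in> carrier_vec p"
  shows "foldr (\<lambda>i acc. transpose_mat (At i) @\<^sub>r acc) xs (transpose_mat C)
           \<in> carrier_mat (sum_list (map (\<lambda>i. (n + i - 1) choose i) xs) + p) n
     \<and> transpose_mat (foldr (\<lambda>i acc. transpose_mat (At i) @\<^sub>r acc) xs (transpose_mat C))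
         *\<^sub>v foldr (\<lambda>i acc. vpow x i @\<^sub>v acc) xs u
       = foldr (\<lambda>i acc. At i *\<^sub>v vpow x i + acc) xs (C *\<^sub>v u)"
  using At
proof (induction xs)
  case Nil then show ?case using C u by simp
next
  case (Cons i xs)
  let ?R = "foldr (\<lambda>i acc. transpose_mat (At i) @\<^sub>r acc) xs (transpose_mat C)"
  let ?d = "foldr (\<lambda>i acc. vpow x i @\<^sub>v acc) xs u"
  let ?s = "sum_list (map (\<lambda>i. (n + i - 1) choose i) xs)"
  have prem: "\<And>j. j \<in> set xs \<Longrightarrow> At j \<in> carrier_mat n ((n + j - 1) choose j)"
    using Cons.prems by simp
  have IH: "?R \<in> carrier_mat (?s + p) n"
     "transpose_mat ?R *\<^sub>v ?d = foldr (\<lambda>i acc. At i *\<^sub>v vpow x i + acc) xs (C *\<^sub>v u)"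
    using Cons.IH[OF prem] by blast+
  have Aic: "At i \<in> carrier_mat n ((n + i - 1) choose i)" using Cons.prems by simp
  then have Ai: "transpose_mat (At i) \<in> carrier_mat ((n + i - 1) choose i) n" by simp
  have vi: "vpow x i \<in> carrier_vec ((n + i - 1) choose i)" using carrier_vecD[OF x] by (intro carrier_vecI) simp
  have dd: "?d \<in> carrier_vec (?s + p)"
    using carrier_vecD[OF x] carrier_vecD[OF u] by (intro carrier_vecI) (simp add: datacol_dim)
  have c1: "transpose_mat (At i) @\<^sub>r ?R \<in> carrier_mat (((n + i - 1) choose i) + (?s + p)) n"
    by (rule carrier_append_rows[OF Ai IH(1)])
  have e1: "transpose_mat (transpose_mat (At i) @\<^sub>r ?R) *\<^sub>v (vpow x i @\<^sub>v ?d)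
      = At i *\<^sub>v vpow x i + foldr (\<lambda>i acc. At i *\<^sub>v vpow x i + acc) xs (C *\<^sub>v u)"
    using transpose_append_rows_mult[OF Ai IH(1) vi dd] IH(2) by simp
  show ?case
    using c1 e1 by (simp add: add.assoc)
qed


lemma proj_sysf:
  fixes A :: "nat \<Rightarrow> real mat" and B W :: "real mat"
  assumes A: "\<And>i. i \<in> set xs \<Longrightarrow> dim_row (A i) = N"
    and B: "dim_row B = N" and W: "W \<in> carrier_mat m N"
  shows "foldr (\<lambda>i acc. A i *\<^sub>v vpow x i + acc) xs (B *\<^sub>v u) \<in> carrier_vec N \<and>
    W *\<^sub>v foldr (\<lambda>i acc. A i *\<^sub>v vpow x i + acc) xs (B *\<^sub>v u)
    = foldr (\<lambda>i acc. W *\<^sub>v (A i *\<^sub>v vpow x i) + acc) xs (W *\<^sub>v (B *\<^sub>v u))"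
  using A
proof (induction xs)
  case Nil then show ?case using B by (intro conjI carrier_vecI) auto
next
  case (Cons i xs)
  let ?f = "foldr (\<lambda>i acc. A i *\<^sub>v vpow x i + acc) xs (B *\<^sub>v u)"
  have IH: "?f \<in> carrier_vec N"
    "W *\<^sub>v ?f = foldr (\<lambda>i acc. W *\<^sub>v (A i *\<^sub>v vpow x i) + acc) xs (W *\<^sub>v (B *\<^sub>v u))"
    using Cons.IH Cons.prems by auto
  have a: "A i *\<^sub>v vpow x i \<in> carrier_vec N" using Cons.prems by (intro carrier_vecI) simp
  have "W *\<^sub>v (A i *\<^sub>v vpow x i + ?f) = W *\<^sub>v (A i *\<^sub>v vpow x i) + W *\<^sub>v ?f"
    by (rule mult_add_distrib_mat_vec[OF W a IH(1)])
  then show ?case using IH a by simp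
qed



theorem corollary3p2:
  fixes N n p l K :: nat
    and A :: "nat \<Rightarrow> real mat" and B V :: "real mat"
    and At :: "nat \<Rightarrow> real mat"
    and x0 :: "real vec" and u xb :: "nat \<Rightarrow> real vec"
  assumes nN: "n \<le> N"
    and A_dim: "\<And>i. i \<in> {1..l} \<Longrightarrow> A i \<in> carrier_mat N ((N + i - 1) choose i)"
    and B_dim: "B \<in> carrier_mat N p"
    and V_dim: "V \<in> carrier_mat N n"
    and V_orth: "transpose_mat V * V = 1\<^sub>m n"
    and At_dim: "\<And>i. i \<in> {1..l} \<Longrightarrow> At i \<in> carrier_mat n ((n + i - 1) choose i)"
    and At_def: "\<And>i y. i \<in> {1..l} \<Longrightarrow> y \<in> carrier_vec n \<Longrightarrow>
                   At i *\<^sub>v vpow y i = transpose_mat V *\<^sub>v (A i *\<^sub>v vpow (V *\<^sub>v y) i)"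
    and x0_in: "x0 \<in> carrier_vec N" "\<exists>y \<in> carrier_vec n. x0 = V *\<^sub>v y"
    and u_dim: "\<And>k. k < K \<Longrightarrow> u k \<in> carrier_vec p"
    and xb0: "xb 0 = transpose_mat V *\<^sub>v x0"
    and xbS: "\<And>k. k < K \<Longrightarrow> xb (Suc k) = transpose_mat V *\<^sub>v sysf A B l (V *\<^sub>v xb k) (u k)"
    and K_ge: "K \<ge> p + (\<Sum>i=1..l. (n + i - 1) choose i)"
    and D_full: "full_rank (mat_of_cols (p + (\<Sum>i=1..l. (n + i - 1) choose i))
                              (map (\<lambda>k. datacol l (xb k) (u k)) [0..<K]))"
  shows "let M = p + (\<Sum>i=1..l. (n + i - 1) choose i);
             D = mat_of_cols M (map (\<lambda>k. datacol l (xb k) (u k)) [0..<K]);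
             Y = mat_of_cols n (map (\<lambda>k. xb (Suc k)) [0..<K]);
             obj = (\<lambda>Oh. frob_sq (transpose_mat D * transpose_mat Oh - transpose_mat Y));
             Ostar = hcat At l (transpose_mat V * B)
         in {Oh \<in> carrier_mat n M. \<forall>Oh' \<in> carrier_mat n M. obj Oh \<le> obj Oh'} = {Ostar}
            \<and> obj Ostar = 0"
  proof -
  define M where "M = p + (\<Sum>i=1..l. (n + i - 1) choose i)"
  define D where "D = mat_of_cols M (map (\<lambda>k. datacol l (xb k) (u k)) [0..<K])"
  define Y where "Y = mat_of_cols n (map (\<lambda>k. xb (Suc k)) [0..<K])"
  define obj where "obj = (\<lambda>Oh. frob_sq (transpose_mat D * transpose_mat Oh - transpose_mat Y))"
  define Vt where "Vt = transpose_mat V"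
  define C where "C = Vt * B"
  define Ostar where "Ostar = hcat At l C"
  have Vt: "Vt \<in> carrier_mat n N" using V_dim unfolding Vt_def by simp
  have C: "C \<in> carrier_mat n p" using Vt B_dim unfolding C_def by simp
  have xb_dim: "xb k \<in> carrier_vec n" if "k \<le> K" for k
  proof (cases k)
    case 0 then show ?thesis using xb0 Vt unfolding Vt_def[symmetric] by (intro carrier_vecI) simp
  next
    case (Suc k') then show ?thesis using xbS[of k'] that Vt unfolding Vt_def[symmetric]
      by (intro carrier_vecI) simp
  qed
  have setl: "set [1..<l+1] = {1..l}" by auto
  have sM: "sum_list (map (\<lambda>i. (n + i - 1) choose i) [1..<l+1]) + p = M"
    unfolding M_def interv_sum_list_conv_sum_set_nat setl by simp
  have Arow: "dim_row (A i) = N" if "i \<in> set [1..<l+1]" for i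
  proof -
    have "i \<in> {1..l}" using that setl by blast
    then show ?thesis using A_dim by blast
  qed
  have key: "xb (Suc k) = foldr (\<lambda>i acc. At i *\<^sub>v vpow (xb k) i + acc) [1..<l+1] (C *\<^sub>v u k)"
    if k: "k < K" for k
  proof -
    have "xb (Suc k) = Vt *\<^sub>v sysf A B l (V *\<^sub>v xb k) (u k)" using xbS[OF k] unfolding Vt_def .
    also have "\<dots> = foldr (\<lambda>i acc. Vt *\<^sub>v (A i *\<^sub>v vpow (V *\<^sub>v xb k) i) + acc) [1..<l+1] (Vt *\<^sub>v (B *\<^sub>v u k))"
      unfolding sysf_def
      by (rule conjunct2[OF proj_sysf[OF Arow _ Vt]]) (use B_dim in auto)
    also have "\<dots> = foldr (\<lambda>i acc. At i *\<^sub>v vpow (xb k) i + acc) [1..<l+1] (C *\<^sub>v u k)"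
    proof (rule foldr_cong)
      show "Vt *\<^sub>v (B *\<^sub>v u k) = C *\<^sub>v u k" unfolding C_def
        using Vt B_dim u_dim[OF k] by simp
    next
      fix i acc assume "i \<in> set [1..<l+1]"
      then have i: "i \<in> {1..l}" using setl by blast
      show "Vt *\<^sub>v (A i *\<^sub>v vpow (V *\<^sub>v xb k) i) + acc = At i *\<^sub>v vpow (xb k) i + acc"
        using At_def[OF i xb_dim[of k]] k unfolding Vt_def by simp
    qed simp
    finally show ?thesis .
  qed
  let ?R = "foldr (\<lambda>i acc. transpose_mat (At i) @\<^sub>r acc) [1..<l+1] (transpose_mat C)"
  have Ostar_eq: "Ostar = transpose_mat ?R" unfolding Ostar_def hcat_def by simp
  have At': "\<And>i. i \<in> set [1..<l+1] \<Longrightarrow> At i \<in> carrier_mat n ((n + i - 1) choose i)"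
    using At_dim setl by blast
  have R: "?R \<in> carrier_mat M n"
  proof -
    have "?R \<in> carrier_mat (sum_list (map (\<lambda>i. (n + i - 1) choose i) [1..<l+1]) + p) n"
      by (rule conjunct1[OF hcat_aux[where xs="[1..<l+1]" and x="0\<^sub>v n" and u="0\<^sub>v p", OF At' C]]) auto
    then show ?thesis unfolding sM .
  qed
  have Ostar: "Ostar \<in> carrier_mat n M" using R Ostar_eq by simp
  have dc: "datacol l (xb k) (u k) \<in> carrier_vec M" if k: "k < K" for k
    using datacol_dim[of "xb k" "[1..<l+1]" "u k"] carrier_vecD[OF xb_dim[of k]] carrier_vecD[OF u_dim[OF k]] k sM
    unfolding datacol_def by (intro carrier_vecI) simp
  have Odc: "Ostar *\<^sub>v datacol l (xb k) (u k) = xb (Suc k)" if k: "k < K" for k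
  proof -
    have "transpose_mat ?R *\<^sub>v foldr (\<lambda>i acc. vpow (xb k) i @\<^sub>v acc) [1..<l+1] (u k)
       = foldr (\<lambda>i acc. At i *\<^sub>v vpow (xb k) i + acc) [1..<l+1] (C *\<^sub>v u k)"
      by (rule conjunct2[OF hcat_aux[where xs="[1..<l+1]", OF At' C xb_dim[of k] u_dim[OF k]]]) (use k in auto)
    then show ?thesis using key[OF k] unfolding Ostar_eq datacol_def by simp
  qed
  have D: "D \<in> carrier_mat M K" unfolding D_def using mat_of_cols_carrier(1)[of M "map (\<lambda>k. datacol l (xb k) (u k)) [0..<K]"] by simp
  have colD: "col D k = datacol l (xb k) (u k)" if k: "k < K" for k
    unfolding D_def using k dc[OF k] by (subst col_mat_of_cols) auto
  have colDc: "col D k \<in> carrier_vec M" if k: "k < K" for k using colD[OF k] dc[OF k] by simp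
  have Y: "Y \<in> carrier_mat n K" unfolding Y_def using mat_of_cols_carrier(1)[of n "map (\<lambda>k. xb (Suc k)) [0..<K]"] by simp
  have Yent: "Y $$ (i, k) = row Ostar i \<bullet> col D k" if "i < n" "k < K" for i k
  proof -
    have "Y $$ (i, k) = xb (Suc k) $ i" unfolding Y_def using that by (simp add: mat_of_cols_index)
    also have "\<dots> = (Ostar *\<^sub>v col D k) $ i" using Odc[of k] colD[of k] that by simp
    also have "\<dots> = row Ostar i \<bullet> col D k" using Ostar that by simp
    finally show ?thesis .
  qed
  have ent: "(transpose_mat D * transpose_mat Oh - transpose_mat Y) $$ (k, i)
      = (row Oh i - row Ostar i) \<bullet> col D k"
    if Oh: "Oh \<in> carrier_mat n M" and k: "k < K" and i: "i < n" for Oh k i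
  proof -
    have "(transpose_mat D * transpose_mat Oh - transpose_mat Y) $$ (k, i)
        = col D k \<bullet> row Oh i - Y $$ (i, k)"
      using D Oh Y k i by simp
    also have "\<dots> = row Oh i \<bullet> col D k - row Ostar i \<bullet> col D k"
      using Yent[OF i k] comm_scalar_prod[OF colDc[OF k], of "row Oh i"] Oh i by simp
    also have "\<dots> = (row Oh i - row Ostar i) \<bullet> col D k"
      using Oh Ostar i colDc[OF k] by (intro minus_scalar_prod_distrib[symmetric]) auto
    finally show ?thesis .
  qed
  have dims: "dim_row (transpose_mat D * transpose_mat Oh - transpose_mat Y) = K"
      "dim_col (transpose_mat D * transpose_mat Oh - transpose_mat Y) = n"
    if "Oh \<in> carrier_mat n M" for Oh using that D Y by auto
  have obj_eq: "obj Oh = (\<Sum>k<K. \<Sum>i<n. ((row Oh i - row Ostar i) \<bullet> col D k)\<^sup>2)"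
    if "Oh \<in> carrier_mat n M" for Oh
    unfolding obj_def frob_sq_def dims[OF that] using ent[OF that] by simp
  have obj0: "obj Ostar = 0"
  proof -
    have "(row Ostar i - row Ostar i) \<bullet> col D k = 0" if "i < n" "k < K" for i k
      using Ostar that colDc[of k] by (subst minus_scalar_prod_distrib[of _ M]) auto
    then show ?thesis using obj_eq[OF Ostar] by simp
  qed
  have objnn: "obj Oh \<ge> 0" if "Oh \<in> carrier_mat n M" for Oh
    unfolding obj_eq[OF that] by (intro sum_nonneg) auto
  have rk: "vec_space.rank M D = M"
    using D_full D K_ge unfolding full_rank_def D_def[symmetric] M_def[symmetric] by simp
  have uniq: "Oh = Ostar" if Oh: "Oh \<in> carrier_mat n M" and z: "obj Oh = 0" for Oh
  proof (rule eq_rowI)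
    fix i assume "i < dim_row Ostar"
    then have i: "i < n" using Ostar by simp
    have "\<forall>k\<in>{..<K}. (\<Sum>i<n. ((row Oh i - row Ostar i) \<bullet> col D k)\<^sup>2) = 0"
      using z unfolding obj_eq[OF Oh]
      by (subst sum_nonneg_eq_0_iff[symmetric]) (auto intro: sum_nonneg)
    then have "\<forall>k\<in>{..<K}. \<forall>i\<in>{..<n}. ((row Oh i - row Ostar i) \<bullet> col D k)\<^sup>2 = 0"
      by (subst (asm) sum_nonneg_eq_0_iff) auto
    then have orth: "\<And>k. k < K \<Longrightarrow> (row Oh i - row Ostar i) \<bullet> col D k = 0" using i by auto
    have "row Oh i - row Ostar i = 0\<^sub>v M"
      by (rule rank_orth[OF D rk _ orth]) (use Oh Ostar in \<open>simp add: carrier_vecI carrier_matD\<close>)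
    then have eqz: "(row Oh i - row Ostar i) $ j = 0" if "j < M" for j using that by simp
    have ro: "row Oh i \<in> carrier_vec M" using Oh i by simp
    have rs: "row Ostar i \<in> carrier_vec M" using Ostar i by simp
    show "row Oh i = row Ostar i"
    proof (rule eq_vecI)
      fix j assume "j < dim_vec (row Ostar i)"
      then have j: "j < M" using Ostar by simp
      show "row Oh i $ j = row Ostar i $ j" using eqz[OF j] index_minus_vec(1)[of j "row Ostar i" "row Oh i"] carrier_vecD[OF rs] j by simp
    qed (use Oh Ostar in simp)
  qed (use Oh Ostar in auto)
  have "{Oh \<in> carrier_mat n M. \<forall>Oh' \<in> carrier_mat n M. obj Oh \<le> obj Oh'} = {Ostar}"
  proof (rule equalityI)
    show "{Oh \<in> carrier_mat n M. \<forall>Oh' \<in> carrier_mat n M. obj Oh \<le> obj Oh'} \<subseteq> {Ostar}"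
    proof
      fix Oh assume "Oh \<in> {Oh \<in> carrier_mat n M. \<forall>Oh' \<in> carrier_mat n M. obj Oh \<le> obj Oh'}"
      then have Oh: "Oh \<in> carrier_mat n M" and "obj Oh \<le> obj Ostar" using Ostar by auto
      then have "obj Oh = 0" using obj0 objnn[OF Oh] by simp
      then show "Oh \<in> {Ostar}" using uniq[OF Oh] by simp
    qed
    show "{Ostar} \<subseteq> {Oh \<in> carrier_mat n M. \<forall>Oh' \<in> carrier_mat n M. obj Oh \<le> obj Oh'}"
      using Ostar obj0 objnn by auto
  qed
  then show ?thesis
    unfolding Let_def M_def[symmetric] D_def[symmetric] Y_def[symmetric]
      Vt_def[symmetric] C_def[symmetric] Ostar_def[symmetric]
    using obj0 unfolding obj_def by simp
qed

end
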